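(* Consider the modified GSEMO on \textsc{LOTZ} with a parent selection mechanism such that, in every iteration in which the population does not cover the whole Pareto front (after the Pareto front has been reached), the probability of selecting a good individual is at least $p_{\mathrm{good}}$. Then the expected time for the modified GSEMO to reach a population covering the whole Pareto front of \textsc{LOTZ} is $O(n^2/p_{\mathrm{good}})$.
   Context: Search space $\{0,1\}^n$; objectives maximised. $\textsc{LOTZ}(x)=(\mathrm{LO}(x),\mathrm{TZ}(x))$, $\mathrm{LO}$ = number of leading ones, $\mathrm{TZ}$ = number of trailing zeros. Dominance: $y$ dominates $x$ if $f_i(y)\ge f_i(x)$ for all $i$, strictly for some $i$; weakly dominates if $\ge$ in all. Pareto set $X^*=\{1^i0^{n-i}:0\le i\le n\}$, front $F^*=f(X^* )$. Modified GSEMO: let $\mathrm{L}(x)=\mathrm{LO}(x)+\mathrm{TZ}(x)$. Start with uniform random $s$, $P=\{s\}$. Each iteration: let $P'\subseteq P$ be the points with maximum $\mathrm{L}$-value; compute diversity scores w.r.t. $P'$ and choose a parent $s\in P'$ by the parent selection mechanism; create $s'$ by flipping each bit independently with probability $1/n$; if $s'$ is not dominated by any member of $P$, add it and remove all members of $P$ weakly dominated by $s'$. Time = number of iterations until $f(P)=F^*$. Good: w.r.t. a population $P$, $x\in P\cap X^*$ is good if some Hamming neighbour $y$ of $x$ satisfies $y\in X^*$ and $f(y)\notin f(P)$. *)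

theory Defs
  imports "HOL-Probability.Probability"
begin

text \<open>Bit strings of length n are represented as bool lists (True = 1).\<close>

definition LO :: "bool list \<Rightarrow> nat" where
  "LO x = length (takeWhile (\<lambda>b. b) x)"

definition TZ :: "bool list \<Rightarrow> nat" where
  "TZ x = length (takeWhile (\<lambda>b. \<not> b) (rev x))"

definition lotz :: "bool list \<Rightarrow> nat \<times> nat" where
  "lotz x = (LO x, TZ x)"

definition Lval :: "bool list \<Rightarrow> nat" where
  "Lval x = LO x + TZ x"

definition weakly_dominates :: "bool list \<Rightarrow> bool list \<Rightarrow> bool" where
  "weakly_dominates y x \<longleftrightarrow> LO y \<ge> LO x \<and> TZ y \<ge> TZ x"

definition dominates :: "bool list \<Rightarrow> bool list \<Rightarrow> bool" where
  "dominates y x \<longleftrightarrow> weakly_dominates y x \<and> (LO y > LO x \<or> TZ y > TZ x)"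

definition pareto_set :: "nat \<Rightarrow> bool list set" where
  "pareto_set n = {replicate i True @ replicate (n - i) False | i. i \<le> n}"

definition pareto_front :: "nat \<Rightarrow> (nat \<times> nat) set" where
  "pareto_front n = lotz ` pareto_set n"

definition hamming_neighbour :: "bool list \<Rightarrow> bool list \<Rightarrow> bool" where
  "hamming_neighbour x y \<longleftrightarrow> length x = length y \<and>
     card {i. i < length x \<and> x ! i \<noteq> y ! i} = 1"

definition good :: "nat \<Rightarrow> bool list set \<Rightarrow> bool list \<Rightarrow> bool" where
  "good n P x \<longleftrightarrow> x \<in> P \<inter> pareto_set n \<and>
     (\<exists>y. hamming_neighbour x y \<and> y \<in> pareto_set n \<and> lotz y \<notin> lotz ` P)"

definition maxL :: "bool list set \<Rightarrow> bool list set" where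
  "maxL P = {x \<in> P. Lval x = Max (Lval ` P)}"

primrec flip_bits :: "real \<Rightarrow> bool list \<Rightarrow> bool list pmf" where
  "flip_bits q [] = return_pmf []"
| "flip_bits q (b # bs) =
     bind_pmf (bernoulli_pmf q) (\<lambda>c. map_pmf (\<lambda>r. (if c then \<not> b else b) # r) (flip_bits q bs))"

definition gsemo_step :: "nat \<Rightarrow> (bool list set \<Rightarrow> bool list pmf) \<Rightarrow> bool list set \<Rightarrow> bool list set pmf" where
  "gsemo_step n sel P =
     bind_pmf (sel (maxL P)) (\<lambda>s.
     map_pmf (\<lambda>s'. if (\<exists>z\<in>P. dominates z s') then P
                    else insert s' {z \<in> P. \<not> weakly_dominates s' z})
       (flip_bits (1 / real n) s))"

definition covered :: "nat \<Rightarrow> bool list set \<Rightarrow> bool" where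
  "covered n P \<longleftrightarrow> lotz ` P = pareto_front n"

definition stopped_step :: "nat \<Rightarrow> (bool list set \<Rightarrow> bool list pmf) \<Rightarrow> bool list set \<Rightarrow> bool list set pmf" where
  "stopped_step n sel P = (if covered n P then return_pmf P else gsemo_step n sel P)"

primrec pop_dist :: "nat \<Rightarrow> (bool list set \<Rightarrow> bool list pmf) \<Rightarrow> nat \<Rightarrow> bool list set pmf" where
  "pop_dist n sel 0 = map_pmf (\<lambda>s. {s}) (pmf_of_set {xs. length xs = n})"
| "pop_dist n sel (Suc t) = bind_pmf (pop_dist n sel t) (stopped_step n sel)"

text \<open>Expected time T = sum over t of Pr[T > t].\<close>
definition expected_time :: "nat \<Rightarrow> (bool list set \<Rightarrow> bool list pmf) \<Rightarrow> ennreal" where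
  "expected_time n sel = (\<Sum>t. ennreal (measure_pmf.prob (pop_dist n sel t) {P. \<not> covered n P}))"

definition valid_pop :: "nat \<Rightarrow> bool list set \<Rightarrow> bool" where
  "valid_pop n P \<longleftrightarrow> finite P \<and> P \<noteq> {} \<and> (\<forall>x\<in>P. length x = n) \<and>
     (\<forall>x\<in>P. \<forall>y\<in>P. x \<noteq> y \<longrightarrow> \<not> weakly_dominates x y)"

end

theory Submission
  imports Defs
begin

lemma LO_le: "LO x \<le> length x" unfolding LO_def by (rule length_takeWhile_le)
lemma LO_nth: "i < LO x \<Longrightarrow> x ! i"
  unfolding LO_def by (metis nth_mem set_takeWhileD takeWhile_nth)
lemma LO_not: "LO x < length x \<Longrightarrow> \<not> x ! LO x"
  unfolding LO_def by (rule nth_length_takeWhile)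
lemma LO_ge: "(\<And>i. i < k \<Longrightarrow> x ! i) \<Longrightarrow> k \<le> length x \<Longrightarrow> k \<le> LO x"
  unfolding LO_def by (rule length_takeWhile_less_P_nth)
lemma TZ_alt: "TZ x = LO (map Not (rev x))"
  unfolding TZ_def LO_def by (simp add: takeWhile_map o_def)
lemma TZ_le: "TZ x \<le> length x" using LO_le[of "map Not (rev x)"] by (simp add: TZ_alt)
lemma TZ_nth: "i < TZ x \<Longrightarrow> \<not> x ! (length x - Suc i)"
  using LO_nth[of i "map Not (rev x)"] LO_le[of "map Not (rev x)"]
  by (simp add: TZ_alt rev_nth)
lemma TZ_ge: "(\<And>i. i < k \<Longrightarrow> \<not> x ! (length x - Suc i)) \<Longrightarrow> k \<le> length x \<Longrightarrow> k \<le> TZ x"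
  unfolding TZ_alt by (rule LO_ge) (auto simp: rev_nth)

lemma Lval_le: assumes "length x = n" shows "Lval x \<le> n"
proof (rule ccontr)
  assume "\<not> Lval x \<le> n"
  hence h: "LO x + TZ x > n" by (simp add: Lval_def)
  have "TZ x \<noteq> 0" using h LO_le[of x] assms by auto
  hence "\<not> x ! (n - TZ x)" using TZ_nth[of "TZ x - 1" x] assms
    by (simp add: Suc_diff_Suc)
  moreover have "x ! (n - TZ x)" using LO_nth[of "n - TZ x" x] h \<open>TZ x \<noteq> 0\<close> TZ_le[of x] assms by linarith
  ultimately show False by simp
qed

lemma pareto_char: assumes "length x = n" "Lval x = n"
  shows "x = replicate (LO x) True @ replicate (n - LO x) False"
proof (rule nth_equalityI)
  show "length x = length (replicate (LO x) True @ replicate (n - LO x) False)"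
    using assms LO_le[of x] by simp
  fix i assume i: "i < length x"
  show "x ! i = (replicate (LO x) True @ replicate (n - LO x) False) ! i"
  proof (cases "i < LO x")
    case True thus ?thesis using LO_nth by (simp add: nth_append)
  next
    case False
    hence "n - Suc i < TZ x" using assms i by (simp add: Lval_def)
    hence "\<not> x ! (n - Suc (n - Suc i))" using TZ_nth assms by blast
    hence "\<not> x ! i" using i assms by (simp add: Suc_diff_Suc)
    thus ?thesis using False i assms by (simp add: nth_append)
  qed
qed

lemma LO_rep: "i \<le> n \<Longrightarrow> LO (replicate i True @ replicate (n - i) False) = i"
proof -
  have "\<And>ys. takeWhile (\<lambda>b. b) (replicate k True @ ys) = replicate k True @ takeWhile (\<lambda>b. b) ys" for k
    by (induction k) auto
  moreover assume "i \<le> n"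
  ultimately show ?thesis unfolding LO_def by (cases "n - i") auto
qed
lemma TZ_rep: "i \<le> n \<Longrightarrow> TZ (replicate i True @ replicate (n - i) False) = n - i"
proof -
  have "\<And>ys. takeWhile Not (replicate k False @ ys) = replicate k False @ takeWhile Not ys" for k
    by (induction k) auto
  moreover assume "i \<le> n"
  moreover have "takeWhile Not (replicate i True) = []" by (cases i) auto
  ultimately show ?thesis unfolding TZ_def by simp
qed

lemma pareto_iff: "x \<in> pareto_set n \<longleftrightarrow> length x = n \<and> Lval x = n"
proof
  assume "x \<in> pareto_set n"
  then obtain i where "i \<le> n" "x = replicate i True @ replicate (n - i) False"
    unfolding pareto_set_def by blast
  thus "length x = n \<and> Lval x = n" by (simp add: Lval_def LO_rep TZ_rep)
next
  assume "length x = n \<and> Lval x = n"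
  hence "x = replicate (LO x) True @ replicate (n - LO x) False" "LO x \<le> n"
    using pareto_char LO_le by auto
  thus "x \<in> pareto_set n" unfolding pareto_set_def by blast
qed

lemma pareto_wd_eq: assumes "x \<in> pareto_set n" "y \<in> pareto_set n" "weakly_dominates y x"
  shows "y = x"
proof -
  have "LO y = LO x" using assms unfolding pareto_iff weakly_dominates_def Lval_def by linarith
  thus ?thesis using assms pareto_char unfolding pareto_iff by metis
qed

lemma not_dom_pareto: assumes "length z = n" "y \<in> pareto_set n" shows "\<not> dominates z y"
  using assms Lval_le[of z n] unfolding pareto_iff dominates_def weakly_dominates_def Lval_def by linarith

lemma pareto_finite: "finite (pareto_set n)" and pareto_card: "card (pareto_set n) \<le> n + 1"
proof -
  have e: "pareto_set n = (\<lambda>i. replicate i True @ replicate (n - i) False) ` {..n}"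
    unfolding pareto_set_def by auto
  show "finite (pareto_set n)" unfolding e by simp
  show "card (pareto_set n) \<le> n + 1" unfolding e using card_image_le[of "{..n}"] by fastforce
qed

lemma flip_len: "y \<in> set_pmf (flip_bits q x) \<Longrightarrow> length y = length x"
  by (induction x arbitrary: y) auto

lemma diffset_Cons: "{i. i < Suc m \<and> (a # x) ! i \<noteq> (b # y) ! i} =
   (if a \<noteq> b then {0} else {}) \<union> Suc ` {i. i < m \<and> x ! i \<noteq> y ! i}"
  apply (rule set_eqI)
  subgoal for i by (cases i) (auto simp: image_iff)
  done

lemma pmf_flip: assumes "0 \<le> q" "q \<le> 1"
  shows "length y = length x \<Longrightarrow> pmf (flip_bits q x) y =
    q ^ card {i. i < length x \<and> x ! i \<noteq> y ! i} * (1 - q) ^ (length x - card {i. i < length x \<and> x ! i \<noteq> y ! i})"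
proof (induction x arbitrary: y)
  case Nil thus ?case by simp
next
  case (Cons a x)
  then obtain b ys where y: "y = b # ys" and l: "length ys = length x" by (cases y) auto
  define d where "d = card {i. i < length x \<and> x ! i \<noteq> ys ! i}"
  have dle: "d \<le> length x" unfolding d_def by (rule order.trans[OF card_mono[of "{..<length x}"]]) auto
  have fin: "finite (Suc ` {i. i < length x \<and> x ! i \<noteq> ys ! i})" by simp
  have cd: "card {i. i < length (a # x) \<and> (a # x) ! i \<noteq> y ! i} = (if a \<noteq> b then Suc d else d)"
    unfolding y length_Cons diffset_Cons d_def using fin
    by (auto simp: card_image inj_on_def)
  have m: "\<And>c. pmf (map_pmf (\<lambda>r. (if c then \<not> a else a) # r) (flip_bits q x)) (b # ys)
     = (if (if c then \<not> a else a) = b then pmf (flip_bits q x) ys else 0)"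
  proof -
    fix c
    show "pmf (map_pmf (\<lambda>r. (if c then \<not> a else a) # r) (flip_bits q x)) (b # ys)
     = (if (if c then \<not> a else a) = b then pmf (flip_bits q x) ys else 0)"
    proof (cases "(if c then \<not> a else a) = b")
      case True
      have "inj (\<lambda>r. (if c then \<not> a else a) # r)" by (simp add: inj_def)
      from pmf_map_inj'[OF this] True show ?thesis by simp
    next
      case False
      thus ?thesis by (auto simp: pmf_eq_0_set_pmf)
    qed
  qed
  have IH: "pmf (flip_bits q x) ys = q ^ d * (1 - q) ^ (length x - d)"
    using Cons.IH[OF l] d_def by simp
  have st: "pmf (flip_bits q (a # x)) (b # ys) = (if a \<noteq> b then q else 1 - q) * pmf (flip_bits q x) ys"
    using assms by (simp add: pmf_bind m)
  show ?case
    unfolding cd unfolding y st IH using assms dle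
    by (auto simp: Suc_diff_le)
qed

lemma one_minus_pow: assumes "n \<ge> 2" shows "(1 - 1 / real n) ^ (n - 1) \<ge> exp (-2)"
proof -
  have x: "0 \<le> 1 / real n" "1 / real n \<le> 1/2" using assms by (auto simp: field_simps)
  have pos: "0 < 1 - 1 / real n" using assms by (auto simp: field_simps)
  have "- (1 / real n) - 2 * (1 / real n)\<^sup>2 \<le> ln (1 - 1 / real n)"
    by (rule ln_one_minus_pos_lower_bound[OF x])
  hence "real n * (- (1 / real n) - 2 * (1 / real n)\<^sup>2) \<le> real n * ln (1 - 1 / real n)"
    by (rule mult_left_mono) simp
  moreover have "real n * (- (1 / real n) - 2 * (1 / real n)\<^sup>2) = -1 - 2 / real n"
    using assms by (simp add: field_simps power2_eq_square)
  moreover have "2 / real n \<le> 1" using assms by (simp add: field_simps)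
  ultimately have "-2 \<le> real n * ln (1 - 1 / real n)" by linarith
  hence "exp (-2) \<le> exp (real n * ln (1 - 1 / real n))" by simp
  also have "\<dots> = (1 - 1 / real n) ^ n" using pos by (simp add: ln_realpow[symmetric])
  also have "\<dots> \<le> (1 - 1 / real n) ^ (n - 1)"
    by (rule power_decreasing) (use pos assms in auto)
  finally show ?thesis .
qed

lemma pmf_flip_nb: assumes "n \<ge> 2" "length x = n" "hamming_neighbour x y"
  shows "pmf (flip_bits (1 / real n) x) y \<ge> exp (-2) / real n"
proof -
  have "pmf (flip_bits (1 / real n) x) y = (1 / real n) * (1 - 1 / real n) ^ (n - 1)"
    using assms pmf_flip[of "1 / real n" y x] unfolding hamming_neighbour_def by auto
  moreover have "(1 / real n) * exp (-2) \<le> (1 / real n) * (1 - 1 / real n) ^ (n - 1)"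
    by (rule mult_left_mono[OF one_minus_pow[OF assms(1)]]) simp
  ultimately show ?thesis by simp
qed

definition step_res :: "bool list set \<Rightarrow> bool list \<Rightarrow> bool list set" where
  "step_res P s' = (if (\<exists>z\<in>P. dominates z s') then P else insert s' {z \<in> P. \<not> weakly_dominates s' z})"

lemma gsemo_step_alt: "gsemo_step n sel P = bind_pmf (sel (maxL P)) (\<lambda>s. map_pmf (step_res P) (flip_bits (1 / real n) s))"
  unfolding gsemo_step_def step_res_def by simp

definition Mx :: "bool list set \<Rightarrow> nat" where "Mx P = Max (Lval ` P)"
definition kp :: "nat \<Rightarrow> bool list set \<Rightarrow> nat" where "kp n P = card (P \<inter> pareto_set n)"

lemma wd_trans: "weakly_dominates x y \<Longrightarrow> weakly_dominates y z \<Longrightarrow> weakly_dominates x z"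
  unfolding weakly_dominates_def by auto
lemma dom_trans: "dominates x y \<Longrightarrow> dominates y z \<Longrightarrow> dominates x z"
  unfolding dominates_def weakly_dominates_def by auto
lemma dom_irrefl: "\<not> dominates x x"
  unfolding dominates_def by auto

lemma valid_Mx_le: "valid_pop n P \<Longrightarrow> Mx P \<le> n"
  unfolding valid_pop_def Mx_def using Lval_le by (auto simp: Max_le_iff)

lemma valid_Mx_ge: "valid_pop n P \<Longrightarrow> x \<in> P \<Longrightarrow> Lval x \<le> Mx P"
  unfolding valid_pop_def Mx_def by auto

lemma maxL_sub: "maxL P \<subseteq> P" unfolding maxL_def by auto
lemma maxL_ne: "valid_pop n P \<Longrightarrow> maxL P \<noteq> {}"
proof -
  assume v: "valid_pop n P"
  hence "Max (Lval ` P) \<in> Lval ` P" unfolding valid_pop_def by (intro Max_in) auto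
  thus ?thesis unfolding maxL_def by auto
qed
lemma maxL_L: "x \<in> maxL P \<Longrightarrow> Lval x = Mx P" unfolding maxL_def Mx_def by auto

lemma step_props:
  assumes v: "valid_pop n P" and l: "length s' = n"
  shows "valid_pop n (step_res P s')" "P \<inter> pareto_set n \<subseteq> step_res P s'"
        "Mx P \<le> Mx (step_res P s')"
        "\<not> (\<exists>z\<in>P. dominates z s') \<Longrightarrow> s' \<in> step_res P s'"
proof -
  show "\<not> (\<exists>z\<in>P. dominates z s') \<Longrightarrow> s' \<in> step_res P s'" unfolding step_res_def by auto
  show "P \<inter> pareto_set n \<subseteq> step_res P s'"
  proof
    fix z assume z: "z \<in> P \<inter> pareto_set n"
    show "z \<in> step_res P s'"
    proof (cases "weakly_dominates s' z")
      case True
      moreover have "Lval z = n" using z pareto_iff by auto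
      ultimately have "Lval s' \<ge> n" unfolding weakly_dominates_def Lval_def by linarith
      hence "s' \<in> pareto_set n" using Lval_le[OF l] l pareto_iff by force
      hence "s' = z" using pareto_wd_eq z True by blast
      thus ?thesis using z unfolding step_res_def by auto
    qed (use z in \<open>auto simp: step_res_def\<close>)
  qed
  show "valid_pop n (step_res P s')"
  proof (cases "\<exists>z\<in>P. dominates z s'")
    case True thus ?thesis using v unfolding step_res_def by simp
  next
    case False
    have "\<forall>x\<in>insert s' {z \<in> P. \<not> weakly_dominates s' z}. \<forall>y\<in>insert s' {z \<in> P. \<not> weakly_dominates s' z}. x \<noteq> y \<longrightarrow> \<not> weakly_dominates x y"
    proof (intro ballI impI)
      fix x y assume x: "x \<in> insert s' {z \<in> P. \<not> weakly_dominates s' z}"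
        and y: "y \<in> insert s' {z \<in> P. \<not> weakly_dominates s' z}" and ne: "x \<noteq> y"
      show "\<not> weakly_dominates x y"
      proof
        assume w: "weakly_dominates x y"
        show False
        proof (cases "x = s'")
          case True thus False using y ne w by auto
        next
          case xs: False
          show False
          proof (cases "y = s'")
            case True
            hence "\<not> dominates x s'" using False x xs by auto
            hence "weakly_dominates s' x" using w True unfolding dominates_def weakly_dominates_def by auto
            thus False using x xs by auto
          next
            case False thus False using x y xs ne w v unfolding valid_pop_def by auto
          qed
        qed
      qed
    qed
    thus ?thesis using v False l unfolding valid_pop_def step_res_def by auto
  qed
  show "Mx P \<le> Mx (step_res P s')"
  proof (cases "\<exists>z\<in>P. dominates z s'")
    case True thus ?thesis unfolding step_res_def by simp
  next
    case False
    have fin: "finite (step_res P s')" using \<open>valid_pop n (step_res P s')\<close> unfolding valid_pop_def by simp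
    obtain m where m: "m \<in> P" "Lval m = Mx P"
      using v unfolding valid_pop_def Mx_def by (metis (mono_tags, lifting) Max_in finite_imageI image_iff image_is_empty)
    show ?thesis
    proof (cases "weakly_dominates s' m")
      case True
      hence "Lval m \<le> Lval s'" unfolding weakly_dominates_def Lval_def by auto
      moreover have "Lval s' \<le> Mx (step_res P s')" unfolding Mx_def using fin False step_res_def by auto
      ultimately show ?thesis using m by simp
    next
      case f2: False
      hence "m \<in> step_res P s'" using False m unfolding step_res_def by auto
      hence "Lval m \<le> Max (Lval ` step_res P s')" using fin by simp
      thus ?thesis using m by (simp add: Mx_def)
    qed
  qed
qed

lemma phase1:
  assumes v: "valid_pop n P" and np: "P \<inter> pareto_set n = {}" and s: "s \<in> P" "Lval s = Mx P"
  shows "Mx P < n \<and> (\<exists>y. hamming_neighbour s y \<and> Mx P + 1 \<le> Mx (step_res P y))"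
proof -
  have l: "length s = n" using v s unfolding valid_pop_def by auto
  have "s \<notin> pareto_set n" using np s by auto
  hence lt: "Lval s < n" using Lval_le[OF l] pareto_iff l by (metis le_neq_implies_less)
  define a where "a = LO s"
  define y where "y = s[a := True]"
  have alt: "a + TZ s < n" using lt unfolding a_def Lval_def by simp
  have an: "a < n" using alt by simp
  have sa: "\<not> s ! a" using LO_not[of s] an l a_def by simp
  have ly: "length y = n" using l y_def by simp
  have LOy: "a + 1 \<le> LO y"
    by (rule LO_ge) (use an l in \<open>auto simp: y_def nth_list_update a_def LO_nth less_Suc_eq\<close>)
  have TZy: "TZ s \<le> TZ y"
  proof (rule TZ_ge)
    fix i assume i: "i < TZ s"
    hence "n - Suc i \<noteq> a" using alt by linarith
    thus "\<not> y ! (length y - Suc i)" using TZ_nth[OF i] l ly unfolding y_def by simp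
  next
    show "TZ s \<le> length y" using TZ_le[of s] l ly by simp
  qed
  have hn: "hamming_neighbour s y"
  proof -
    have "{i. i < length s \<and> s ! i \<noteq> y ! i} = {a}"
      using an l sa unfolding y_def by (auto simp: nth_list_update)
    thus ?thesis using l ly unfolding hamming_neighbour_def by simp
  qed
  have dys: "dominates y s" using LOy TZy unfolding dominates_def weakly_dominates_def a_def by auto
  have acc: "\<not> (\<exists>z\<in>P. dominates z y)"
  proof
    assume "\<exists>z\<in>P. dominates z y"
    then obtain z where z: "z \<in> P" "dominates z y" by blast
    hence "dominates z s" using dom_trans dys by blast
    moreover hence "z \<noteq> s" using dom_irrefl by blast
    ultimately show False using v z s unfolding valid_pop_def dominates_def by blast
  qed
  have "y \<in> step_res P y" using step_props(4)[OF v ly] acc by simp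
  hence "Lval y \<le> Mx (step_res P y)" using valid_Mx_ge[OF step_props(1)[OF v ly]] by simp
  moreover have "Mx P + 1 \<le> Lval y" using LOy TZy s unfolding Lval_def a_def by simp
  ultimately show ?thesis using hn lt s by auto
qed

lemma phase2:
  assumes v: "valid_pop n P" and g: "good n P s"
  shows "\<exists>y. hamming_neighbour s y \<and> kp n P + 1 \<le> kp n (step_res P y)"
proof -
  obtain y where y: "hamming_neighbour s y" "y \<in> pareto_set n" "lotz y \<notin> lotz ` P"
    using g unfolding good_def by blast
  have yP: "y \<notin> P" using y(3) by auto
  have ly: "length y = n" using y(2) pareto_iff by auto
  have acc: "\<not> (\<exists>z\<in>P. dominates z y)"
    using not_dom_pareto[OF _ y(2)] v unfolding valid_pop_def by auto
  have "y \<in> step_res P y" using step_props(4)[OF v ly] acc by simp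
  hence sub: "insert y (P \<inter> pareto_set n) \<subseteq> step_res P y \<inter> pareto_set n"
    using step_props(2)[OF v ly] y(2) by auto
  have fin: "finite (step_res P y \<inter> pareto_set n)" using pareto_finite by simp
  have "card (insert y (P \<inter> pareto_set n)) = kp n P + 1"
    unfolding kp_def using yP pareto_finite by simp
  hence "kp n P + 1 \<le> kp n (step_res P y)" unfolding kp_def using card_mono[OF fin sub] by simp
  thus ?thesis using y by blast
qed

lemma drift_generic:
  fixes M :: "'a pmf" and f :: "'a \<Rightarrow> real"
  assumes f0: "\<And>x. 0 \<le> f x" and g0: "0 \<le> g"
    and b: "\<And>x. x \<in> set_pmf M \<Longrightarrow> f x + g * indicator E x \<le> a"
    and e: "1 \<le> ennreal g * emeasure M E"
  shows "1 + (\<integral>\<^sup>+x. ennreal (f x) \<partial>M) \<le> ennreal a"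
proof -
  have "1 + (\<integral>\<^sup>+x. ennreal (f x) \<partial>M) \<le> ennreal g * emeasure M E + (\<integral>\<^sup>+x. ennreal (f x) \<partial>M)"
    using e by (rule add_right_mono)
  also have "ennreal g * emeasure M E = (\<integral>\<^sup>+x. ennreal g * indicator E x \<partial>M)"
    by (simp add: nn_integral_cmult_indicator)
  also have "\<dots> + (\<integral>\<^sup>+x. ennreal (f x) \<partial>M) = (\<integral>\<^sup>+x. ennreal g * indicator E x + ennreal (f x) \<partial>M)"
    by (rule nn_integral_add[symmetric]) simp_all
  also have "\<dots> \<le> (\<integral>\<^sup>+x. ennreal a \<partial>M)"
  proof (rule nn_integral_mono_AE)
    show "AE x in measure_pmf M. ennreal g * indicator E x + ennreal (f x) \<le> ennreal a"
      unfolding AE_measure_pmf_iff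
    proof
      fix x assume x: "x \<in> set_pmf M"
      have "ennreal g * indicator E x + ennreal (f x) = ennreal (f x + g * indicator E x)"
        using f0[of x] g0 by (cases "x \<in> E") (simp_all add: ennreal_plus add.commute)
      also have "\<dots> \<le> ennreal a" using b[OF x] by (rule ennreal_leI)
      finally show "ennreal g * indicator E x + ennreal (f x) \<le> ennreal a" .
    qed
  qed
  also have "\<dots> = ennreal a" by simp
  finally show ?thesis .
qed

definition cc :: real where "cc = exp (-2)"

definition hpot :: "nat \<Rightarrow> real \<Rightarrow> bool list set \<Rightarrow> real" where
  "hpot n p P = (if covered n P then 0 else (real n / cc) * real (n - Mx P) + (real n / (cc * p)) * real (n + 1 - kp n P))"

lemma cc_pos: "cc > 0" unfolding cc_def by simp

lemma hpot_nonneg: "0 < p \<Longrightarrow> 0 \<le> hpot n p P"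
  unfolding hpot_def using cc_pos by auto

lemma hpot_le: "0 < p \<Longrightarrow> hpot n p P \<le> (real n / cc) * real n + (real n / (cc * p)) * real (n + 1)"
proof -
  assume p: "0 < p"
  have a: "0 \<le> real n / cc" "0 \<le> real n / (cc * p)" using cc_pos p by auto
  have "(real n / cc) * real (n - Mx P) \<le> (real n / cc) * real n"
    by (rule mult_left_mono[OF _ a(1)]) simp
  moreover have "(real n / (cc * p)) * real (n + 1 - kp n P) \<le> (real n / (cc * p)) * real (n + 1)"
    by (rule mult_left_mono[OF _ a(2)]) simp
  moreover have "0 \<le> (real n / cc) * real n + (real n / (cc * p)) * real (n + 1)"
    using a by (intro add_nonneg_nonneg mult_nonneg_nonneg) auto
  ultimately show ?thesis unfolding hpot_def by (cases "covered n P") (simp_all only: if_True if_False; linarith)+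
qed

lemma hpot_dec:
  assumes p: "0 < p" and nc: "\<not> covered n P" and m: "Mx P \<le> Mx P'" and k: "kp n P \<le> kp n P'"
  shows "hpot n p P' + real n / cc * (real (n - Mx P) - real (n - Mx P'))
          + real n / (cc * p) * (real (n + 1 - kp n P) - real (n + 1 - kp n P')) \<le> hpot n p P"
proof -
  have a: "0 \<le> real n / cc" "0 \<le> real n / (cc * p)" using cc_pos p by auto
  have b: "0 \<le> real n / cc * real (n - Mx P')" "0 \<le> real n / (cc * p) * real (n + 1 - kp n P')"
    using a by (simp_all only: mult_nonneg_nonneg of_nat_0_le_iff)
  show ?thesis
  proof (cases "covered n P'")
    case True thus ?thesis using nc b unfolding hpot_def by (simp add: algebra_simps)
  next
    case False thus ?thesis using nc unfolding hpot_def by (simp add: algebra_simps)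
  qed
qed

lemma stopped_support:
  assumes v: "valid_pop n P" and selp: "\<forall>Q. Q \<noteq> {} \<longrightarrow> set_pmf (sel Q) \<subseteq> Q"
    and nc: "\<not> covered n P" and P': "P' \<in> set_pmf (stopped_step n sel P)"
  shows "\<exists>s s'. s \<in> maxL P \<and> length s' = n \<and> P' = step_res P s'"
proof -
  from P' nc obtain s s' where s: "s \<in> set_pmf (sel (maxL P))" and s': "s' \<in> set_pmf (flip_bits (1 / real n) s)"
    and e: "P' = step_res P s'"
    unfolding stopped_step_def gsemo_step_alt by auto
  have sm: "s \<in> maxL P" using s selp maxL_ne[OF v] by blast
  hence "length s = n" using v maxL_sub[of P] unfolding valid_pop_def by auto
  hence "length s' = n" using flip_len[OF s'] by simp
  thus ?thesis using sm e by blast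
qed

lemma valid_stopped:
  assumes v: "valid_pop n P" and selp: "\<forall>Q. Q \<noteq> {} \<longrightarrow> set_pmf (sel Q) \<subseteq> Q"
    and P': "P' \<in> set_pmf (stopped_step n sel P)"
  shows "valid_pop n P'"
proof (cases "covered n P")
  case True thus ?thesis using v P' unfolding stopped_step_def by simp
next
  case False
  then obtain s s' where "length s' = n" "P' = step_res P s'" using stopped_support[OF v selp False P'] by blast
  thus ?thesis using step_props(1)[OF v] by simp
qed

lemma kp_mono: assumes v: "valid_pop n P" "length s' = n" shows "kp n P \<le> kp n (step_res P s')"
proof -
  have "P \<inter> pareto_set n \<subseteq> step_res P s' \<inter> pareto_set n" using step_props(2)[OF assms] by auto
  thus ?thesis unfolding kp_def by (intro card_mono) (simp_all add: pareto_finite)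
qed

lemma kp_le: "kp n P \<le> n + 1"
  unfolding kp_def using card_mono[OF pareto_finite, of "P \<inter> pareto_set n" n] pareto_card[of n] by auto


lemma emeasure_step_lb:
  assumes "s \<in> maxL P" "valid_pop n P" "n \<ge> 2" "hamming_neighbour s y" "step_res P y \<in> E"
  shows "ennreal (cc / real n) \<le> emeasure (measure_pmf (flip_bits (1 / real n) s)) (step_res P -` E)"
proof -
  have "length s = n" using assms(1,2) maxL_sub[of P] unfolding valid_pop_def by auto
  hence "cc / real n \<le> pmf (flip_bits (1 / real n) s) y"
    using pmf_flip_nb[OF assms(3) _ assms(4)] unfolding cc_def by simp
  hence "ennreal (cc / real n) \<le> emeasure (measure_pmf (flip_bits (1 / real n) s)) {y}"
    by (simp add: emeasure_pmf_single)
  also have "\<dots> \<le> emeasure (measure_pmf (flip_bits (1 / real n) s)) (step_res P -` E)"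
    by (rule emeasure_mono) (use assms(5) in auto)
  finally show ?thesis .
qed

lemma one_step:
  assumes n2: "n \<ge> 2" and p: "0 < p" "p \<le> 1"
    and selp: "\<forall>Q. Q \<noteq> {} \<longrightarrow> set_pmf (sel Q) \<subseteq> Q"
    and hyp: "\<forall>P. valid_pop n P \<and> P \<inter> pareto_set n \<noteq> {} \<and> \<not> covered n P \<longrightarrow>
          measure_pmf.prob (sel (maxL P)) {x. good n P x} \<ge> p"
    and v: "valid_pop n P"
  shows "indicator {P. \<not> covered n P} P + (\<integral>\<^sup>+P'. ennreal (hpot n p P') \<partial>stopped_step n sel P) \<le> ennreal (hpot n p P)"
proof (cases "covered n P")
  case True thus ?thesis unfolding stopped_step_def by (simp add: nn_integral_return)
next
  case nc: False
  define M where "M = gsemo_step n sel P"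
  have st: "stopped_step n sel P = M" unfolding M_def stopped_step_def using nc by simp
  have sup: "\<And>P'. P' \<in> set_pmf M \<Longrightarrow> \<exists>s s'. s \<in> maxL P \<and> length s' = n \<and> P' = step_res P s'"
    using stopped_support[OF v selp nc] st by simp
  have em: "\<And>E. emeasure (measure_pmf M) E =
      (\<integral>\<^sup>+s. emeasure (measure_pmf (flip_bits (1 / real n) s)) (step_res P -` E) \<partial>sel (maxL P))"
    unfolding M_def gsemo_step_alt by simp
  have selsub: "\<And>s. s \<in> set_pmf (sel (maxL P)) \<Longrightarrow> s \<in> maxL P" using selp maxL_ne[OF v] by blast
  have h0: "\<And>x. 0 \<le> hpot n p x" using hpot_nonneg p by blast
  have main: "1 + (\<integral>\<^sup>+P'. ennreal (hpot n p P') \<partial>M) \<le> ennreal (hpot n p P)"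
  proof (cases "P \<inter> pareto_set n = {}")
    case np: True
    obtain s0 where s0: "s0 \<in> maxL P" using maxL_ne[OF v] by blast
    have MxL: "Mx P < n" using phase1[OF v np subsetD[OF maxL_sub s0] maxL_L[OF s0]] by blast
    define E where "E = {P'. Mx P + 1 \<le> Mx P'}"
    show ?thesis
    proof (rule drift_generic[OF h0, where g = "real n / cc" and M = M and E = E])
      show "0 \<le> real n / cc" using cc_pos by simp
    next
      fix P' assume "P' \<in> set_pmf M"
      then obtain s s' where ss: "s \<in> maxL P" "length s' = n" "P' = step_res P s'" using sup by blast
      have m: "Mx P \<le> Mx P'" "kp n P \<le> kp n P'" using step_props(3)[OF v ss(2)] kp_mono[OF v ss(2)] ss by auto
      have d: "real n / cc * indicator E P' \<le> real n / cc * (real (n - Mx P) - real (n - Mx P'))"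
      proof (cases "P' \<in> E")
        case True
        hence "n - Mx P' + 1 \<le> n - Mx P" using MxL unfolding E_def by simp
        hence "real (n - Mx P' + 1) \<le> real (n - Mx P)" by (simp only: of_nat_le_iff)
        hence "real (n - Mx P') + 1 \<le> real (n - Mx P)" by simp
        hence "1 \<le> real (n - Mx P) - real (n - Mx P')" by simp
        hence "real n / cc * 1 \<le> real n / cc * (real (n - Mx P) - real (n - Mx P'))"
          by (rule mult_left_mono) (use cc_pos in simp)
        moreover have "indicator E P' = (1::real)" using True by simp
        ultimately show ?thesis by (simp only: mult_1_right)
      next
        case False
        have "n - Mx P' \<le> n - Mx P" using m by simp
        hence "0 \<le> real (n - Mx P) - real (n - Mx P')" by simp
        thus ?thesis using False cc_pos by (simp add: indicator_def)
      qed
      have "0 \<le> real n / (cc * p) * (real (n + 1 - kp n P) - real (n + 1 - kp n P'))"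
        using m p cc_pos kp_le[of n P'] by (intro mult_nonneg_nonneg) (auto simp: of_nat_diff)
      thus "hpot n p P' + real n / cc * indicator E P' \<le> hpot n p P"
        using hpot_dec[OF p(1) nc m] d by linarith
    next
      have "ennreal (cc / real n) = (\<integral>\<^sup>+s. ennreal (cc / real n) \<partial>sel (maxL P))" by simp
      also have "\<dots> \<le> emeasure (measure_pmf M) E"
        unfolding em
      proof (rule nn_integral_mono_AE, unfold AE_measure_pmf_iff, intro ballI)
        fix s assume "s \<in> set_pmf (sel (maxL P))"
        hence s: "s \<in> maxL P" by (rule selsub)
        obtain y where "hamming_neighbour s y" "Mx P + 1 \<le> Mx (step_res P y)"
          using phase1[OF v np subsetD[OF maxL_sub s] maxL_L[OF s]] by blast
        thus "ennreal (cc / real n) \<le> emeasure (measure_pmf (flip_bits (1 / real n) s)) (step_res P -` E)"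
          using emeasure_step_lb[OF s v n2, of y E] unfolding E_def by simp
      qed
      finally have "ennreal (real n / cc) * ennreal (cc / real n) \<le> ennreal (real n / cc) * emeasure (measure_pmf M) E"
        by (rule mult_left_mono) simp
      moreover have "ennreal (real n / cc) * ennreal (cc / real n) = 1"
      proof -
        have "real n / cc * (cc / real n) = 1" using n2 cc_pos by (simp add: field_simps)
        moreover have "ennreal (real n / cc) * ennreal (cc / real n) = ennreal (real n / cc * (cc / real n))"
          by (rule ennreal_mult''[symmetric]) (use cc_pos in simp)
        ultimately show ?thesis by simp
      qed
      ultimately show "1 \<le> ennreal (real n / cc) * emeasure (measure_pmf M) E" by simp
    qed
  next
    case yp: False
    obtain x0 where x0: "x0 \<in> P \<inter> pareto_set n" using yp by blast
    have MxP: "Mx P = n" using valid_Mx_le[OF v] valid_Mx_ge[OF v, of x0] x0 pareto_iff by force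
    define E where "E = {P'. kp n P + 1 \<le> kp n P'}"
    show ?thesis
    proof (rule drift_generic[OF h0, where g = "real n / (cc * p)" and M = M and E = E])
      show "0 \<le> real n / (cc * p)" using cc_pos p by simp
    next
      fix P' assume "P' \<in> set_pmf M"
      then obtain s s' where ss: "s \<in> maxL P" "length s' = n" "P' = step_res P s'" using sup by blast
      have m: "Mx P \<le> Mx P'" "kp n P \<le> kp n P'" using step_props(3)[OF v ss(2)] kp_mono[OF v ss(2)] ss by auto
      have mm: "n - Mx P' = n - Mx P" using m MxP by simp
      have d: "real n / (cc * p) * indicator E P' \<le> real n / (cc * p) * (real (n + 1 - kp n P) - real (n + 1 - kp n P'))"
      proof (cases "P' \<in> E")
        case True
        hence "n + 1 - kp n P' + 1 \<le> n + 1 - kp n P" using kp_le[of n P'] unfolding E_def by simp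
        hence "real (n + 1 - kp n P' + 1) \<le> real (n + 1 - kp n P)" by (simp only: of_nat_le_iff)
        hence "1 \<le> real (n + 1 - kp n P) - real (n + 1 - kp n P')" by simp
        hence "real n / (cc * p) * 1 \<le> real n / (cc * p) * (real (n + 1 - kp n P) - real (n + 1 - kp n P'))"
          by (rule mult_left_mono) (use cc_pos p in simp)
        moreover have "indicator E P' = (1::real)" using True by simp
        ultimately show ?thesis by (simp only: mult_1_right)
      next
        case False
        have "n + 1 - kp n P' \<le> n + 1 - kp n P" using m by simp
        hence "0 \<le> real (n + 1 - kp n P) - real (n + 1 - kp n P')" by simp
        thus ?thesis using False cc_pos p by (simp add: indicator_def)
      qed
      thus "hpot n p P' + real n / (cc * p) * indicator E P' \<le> hpot n p P"
        using hpot_dec[OF p(1) nc m] mm by simp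
    next
      have "ennreal (cc / real n) * ennreal p \<le> ennreal (cc / real n) * emeasure (measure_pmf (sel (maxL P))) {x. good n P x}"
        using hyp v yp nc by (intro mult_left_mono) (auto simp: measure_pmf.emeasure_eq_measure)
      also have "\<dots> = (\<integral>\<^sup>+s. ennreal (cc / real n) * indicator {x. good n P x} s \<partial>sel (maxL P))"
        by (simp add: nn_integral_cmult_indicator)
      also have "\<dots> \<le> emeasure (measure_pmf M) E"
        unfolding em
      proof (rule nn_integral_mono_AE, unfold AE_measure_pmf_iff, intro ballI)
        fix s assume "s \<in> set_pmf (sel (maxL P))"
        hence s: "s \<in> maxL P" by (rule selsub)
        show "ennreal (cc / real n) * indicator {x. good n P x} s \<le> emeasure (measure_pmf (flip_bits (1 / real n) s)) (step_res P -` E)"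
        proof (cases "good n P s")
          case True
          obtain y where "hamming_neighbour s y" "kp n P + 1 \<le> kp n (step_res P y)"
            using phase2[OF v True] by blast
          thus ?thesis using emeasure_step_lb[OF s v n2, of y E] True unfolding E_def by simp
        qed simp
      qed
      finally have "ennreal (real n / (cc * p)) * (ennreal (cc / real n) * ennreal p) \<le> ennreal (real n / (cc * p)) * emeasure (measure_pmf M) E"
        by (rule mult_left_mono) simp
      moreover have "ennreal (real n / (cc * p)) * (ennreal (cc / real n) * ennreal p) = 1"
      proof -
        have "real n / (cc * p) * (cc / real n * p) = 1" using n2 cc_pos p by (simp add: field_simps)
        moreover have "ennreal (cc / real n) * ennreal p = ennreal (cc / real n * p)"
          by (rule ennreal_mult''[symmetric]) (use p in simp)
        moreover have "ennreal (real n / (cc * p)) * ennreal (cc / real n * p) = ennreal (real n / (cc * p) * (cc / real n * p))"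
          by (rule ennreal_mult''[symmetric]) (use cc_pos p in simp)
        ultimately show ?thesis by simp
      qed
      ultimately show "1 \<le> ennreal (real n / (cc * p)) * emeasure (measure_pmf M) E" by simp
    qed
  qed
  thus ?thesis using nc st by simp
qed


lemma finite_bool_lists: "finite {xs :: bool list. length xs = n}"
  using finite_lists_length_eq[of "UNIV :: bool set" n] by simp

lemma valid_pop_dist:
  assumes selp: "\<forall>Q. Q \<noteq> {} \<longrightarrow> set_pmf (sel Q) \<subseteq> Q"
  shows "P \<in> set_pmf (pop_dist n sel t) \<Longrightarrow> valid_pop n P"
proof (induction t arbitrary: P)
  case 0
  have "replicate n True \<in> {xs :: bool list. length xs = n}" by simp
  hence ne: "{xs :: bool list. length xs = n} \<noteq> {}" by blast
  from 0 obtain s where "P = {s}" "s \<in> set_pmf (pmf_of_set {xs :: bool list. length xs = n})"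
    by auto
  hence "P = {s}" "length s = n" using set_pmf_of_set[OF ne finite_bool_lists] by auto
  thus ?case unfolding valid_pop_def by simp
next
  case (Suc t)
  then obtain Q where "Q \<in> set_pmf (pop_dist n sel t)" "P \<in> set_pmf (stopped_step n sel Q)" by auto
  thus ?case using Suc.IH[of Q] valid_stopped[OF _ selp, where P = Q] by simp
qed

lemma arith_bound:
  assumes n2: "2 \<le> n" and p: "0 < p" "p \<le> (1::real)"
  shows "real n / cc * real n + real n / (cc * p) * real (n + 1) \<le> 3 / cc * real n ^ 2 / p"
proof -
  have e1: "real n / cc * real n + real n / (cc * p) * real (n + 1) = (real n * real n * p + real n * (real n + 1)) / (cc * p)"
    using cc_pos p by (simp add: field_simps)
  have "real n * real n * p \<le> real n * real n" using p by (simp add: mult_left_le)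
  moreover have "real n \<le> real n * real n" using n2 by simp
  ultimately have "real n * real n * p + real n * (real n + 1) \<le> 3 * (real n * real n)"
    by (simp add: distrib_left)
  hence "(real n * real n * p + real n * (real n + 1)) / (cc * p) \<le> 3 * (real n * real n) / (cc * p)"
    by (rule divide_right_mono) (use cc_pos p in simp)
  also have "\<dots> = 3 / cc * real n ^ 2 / p" by (simp add: power2_eq_square)
  finally show ?thesis using e1 by simp
qed

theorem lemma8:
  shows "\<exists>C N. \<forall>n \<ge> N. \<forall>(p::real) (sel :: bool list set \<Rightarrow> bool list pmf).
     0 < p \<and> p \<le> 1 \<and>
     (\<forall>Q. Q \<noteq> {} \<longrightarrow> set_pmf (sel Q) \<subseteq> Q) \<and>
     (\<forall>P. valid_pop n P \<and> P \<inter> pareto_set n \<noteq> {} \<and> \<not> covered n P \<longrightarrow>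
          measure_pmf.prob (sel (maxL P)) {x. good n P x} \<ge> p)
     \<longrightarrow> expected_time n sel \<le> ennreal (C * real n ^ 2 / p)"
proof (rule exI[of _ "3 / cc"], rule exI[of _ 2], intro allI impI)
  fix n :: nat and p :: real and sel :: "bool list set \<Rightarrow> bool list pmf"
  assume n2: "2 \<le> n"
  assume asm: "0 < p \<and> p \<le> 1 \<and>
     (\<forall>Q. Q \<noteq> {} \<longrightarrow> set_pmf (sel Q) \<subseteq> Q) \<and>
     (\<forall>P. valid_pop n P \<and> P \<inter> pareto_set n \<noteq> {} \<and> \<not> covered n P \<longrightarrow>
          measure_pmf.prob (sel (maxL P)) {x. good n P x} \<ge> p)"
  hence p: "0 < p" "p \<le> 1" and selp: "\<forall>Q. Q \<noteq> {} \<longrightarrow> set_pmf (sel Q) \<subseteq> Q"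
    and hyp: "\<forall>P. valid_pop n P \<and> P \<inter> pareto_set n \<noteq> {} \<and> \<not> covered n P \<longrightarrow>
          measure_pmf.prob (sel (maxL P)) {x. good n P x} \<ge> p" by auto
  define a where "a t = (\<integral>\<^sup>+P. ennreal (hpot n p P) \<partial>pop_dist n sel t)" for t
  define u where "u t = emeasure (measure_pmf (pop_dist n sel t)) {P. \<not> covered n P}" for t
  define H where "H = real n / cc * real n + real n / (cc * p) * real (n + 1)"
  have stepineq: "u t + a (Suc t) \<le> a t" for t
  proof -
    have "u t + a (Suc t) = (\<integral>\<^sup>+P. indicator {P. \<not> covered n P} P \<partial>pop_dist n sel t)
        + (\<integral>\<^sup>+P. (\<integral>\<^sup>+P'. ennreal (hpot n p P') \<partial>stopped_step n sel P) \<partial>pop_dist n sel t)"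
    proof -
      have "u t = (\<integral>\<^sup>+P. indicator {P. \<not> covered n P} P \<partial>pop_dist n sel t)"
        unfolding u_def by (rule nn_integral_indicator[symmetric]) simp
      moreover have "a (Suc t) = (\<integral>\<^sup>+P. (\<integral>\<^sup>+P'. ennreal (hpot n p P') \<partial>stopped_step n sel P) \<partial>pop_dist n sel t)"
        unfolding a_def by (simp only: pop_dist.simps nn_integral_bind_pmf)
      ultimately show ?thesis by simp
    qed
    also have "\<dots> = (\<integral>\<^sup>+P. indicator {P. \<not> covered n P} P + (\<integral>\<^sup>+P'. ennreal (hpot n p P') \<partial>stopped_step n sel P) \<partial>pop_dist n sel t)"
      by (rule nn_integral_add[symmetric]) simp_all
    also have "\<dots> \<le> a t"
      unfolding a_def
    proof (rule nn_integral_mono_AE, unfold AE_measure_pmf_iff, intro ballI)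
      fix P assume "P \<in> set_pmf (pop_dist n sel t)"
      hence v: "valid_pop n P" using valid_pop_dist[OF selp] by blast
      show "indicator {P. \<not> covered n P} P + (\<integral>\<^sup>+P'. ennreal (hpot n p P') \<partial>stopped_step n sel P) \<le> ennreal (hpot n p P)"
        by (rule one_step[OF n2 p selp hyp v])
    qed
    finally show ?thesis .
  qed
  have accum: "(\<Sum>s<t. u s) + a t \<le> a 0" for t
  proof (induction t)
    case 0 thus ?case by simp
  next
    case (Suc t)
    have "(\<Sum>s<Suc t. u s) + a (Suc t) = (\<Sum>s<t. u s) + (u t + a (Suc t))" by (simp add: add.assoc)
    also have "\<dots> \<le> (\<Sum>s<t. u s) + a t" using stepineq[of t] by (rule add_left_mono)
    finally show ?case using Suc.IH by (rule order_trans)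
  qed
  have a0: "a 0 \<le> ennreal H"
  proof -
    have "a 0 \<le> (\<integral>\<^sup>+P. ennreal H \<partial>pop_dist n sel 0)"
      unfolding a_def H_def by (intro nn_integral_mono ennreal_leI hpot_le p(1))
    thus ?thesis by simp
  qed
  have "expected_time n sel = (\<Sum>t. u t)"
    unfolding expected_time_def u_def by (simp add: measure_pmf.emeasure_eq_measure)
  also have "\<dots> \<le> ennreal H"
  proof (rule suminf_le_const[OF summableI])
    fix t
    have "(\<Sum>s<t. u s) \<le> (\<Sum>s<t. u s) + a t" by simp
    also have "\<dots> \<le> a 0" by (rule accum)
    finally show "(\<Sum>s<t. u s) \<le> ennreal H" using a0 by simp
  qed
  also have "ennreal H \<le> ennreal (3 / cc * real n ^ 2 / p)"
    unfolding H_def using arith_bound[OF n2 p] by (rule ennreal_leI)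
  finally show "expected_time n sel \<le> ennreal (3 / cc * real n ^ 2 / p)" .
qed

end
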